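(* Assume $K_1\subseteq K_2\subseteq\cdots\subseteq K_n\subseteq\mathbb F_q$ are subfields, $d_i=|K_i|$. Let $f\in\mathbb F_q[X_1,\dots,X_n]$ have degree $d=\sum_{i=1}^k(d_i-1)+\ell$ with $0\le k<n$ and $0<\ell\le d_{k+1}-1$, and suppose no monomial occurring in $f$ is divisible by $X_i^{d_i}$ for any $i\in\{1,\dots,n\}$. If the Hamming weight of $\Psi(f)$ equals $(d_{k+1}-\ell)\prod_{i=k+2}^n d_i$, then there exist $j\in\{1,\dots,k+1\}$ with $d_j\ge d_{k+1}-\ell$ and distinct indices $t_1,\dots,t_{k+1}\in\{1,\dots,n\}$ with $K_{t_i}=K_i$ for all $i\in\{1,\dots,k+1\}$, such that the monomial $$X_{t_j}^{\,d_j-(d_{k+1}-\ell)}\prod_{\substack{i=1\\ i\ne j}}^{k+1}X_{t_i}^{\,d_i-1}$$ occurs in $f$ with nonzero coefficient.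
   Context: $\mathcal X=K_1\times\cdots\times K_n=\{\boldsymbol\alpha_1,\dots,\boldsymbol\alpha_m\}$ (fixed enumeration), $m=\prod d_i$, and $\Psi:\mathbb F_q[X_1,\dots,X_n]\to\mathbb F_q^m$, $f\mapsto(f(\boldsymbol\alpha_1),\dots,f(\boldsymbol\alpha_m))$. Empty products equal $1$. *)

theory Defs
  imports Main "HOL-Library.Poly_Mapping" "HOL-Library.FuncSet"
begin

type_synonym 'a mpoly_rep = "(nat \<Rightarrow>\<^sub>0 nat) \<Rightarrow>\<^sub>0 'a"

definition is_subfield :: "'a::field set \<Rightarrow> bool" where
  "is_subfield K \<longleftrightarrow> 0 \<in> K \<and> 1 \<in> K \<and>
     (\<forall>x\<in>K. \<forall>y\<in>K. x + y \<in> K \<and> x * y \<in> K) \<and>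
     (\<forall>x\<in>K. - x \<in> K) \<and> (\<forall>x\<in>K. x \<noteq> 0 \<longrightarrow> inverse x \<in> K)"

definition mono_deg :: "(nat \<Rightarrow>\<^sub>0 nat) \<Rightarrow> nat" where
  "mono_deg m = (\<Sum>v\<in>Poly_Mapping.keys m. Poly_Mapping.lookup m v)"

definition mpoly_tdeg :: "'a::zero mpoly_rep \<Rightarrow> nat" where
  "mpoly_tdeg f = Max (insert 0 (mono_deg ` Poly_Mapping.keys f))"

definition mpoly_eval :: "'a::comm_semiring_1 mpoly_rep \<Rightarrow> (nat \<Rightarrow> 'a) \<Rightarrow> 'a" where
  "mpoly_eval f \<alpha> = (\<Sum>m\<in>Poly_Mapping.keys f. Poly_Mapping.lookup f m * (\<Prod>v\<in>Poly_Mapping.keys m. \<alpha> v ^ Poly_Mapping.lookup m v))"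

text \<open>Hamming weight of \<Psi>(f): number of points of K_1 x ... x K_n where f does not vanish.\<close>
definition hamming_weight_eval :: "nat \<Rightarrow> (nat \<Rightarrow> 'a::comm_semiring_1 set) \<Rightarrow> 'a mpoly_rep \<Rightarrow> nat" where
  "hamming_weight_eval n K f = card {\<alpha> \<in> Pi\<^sub>E {1..n} K. mpoly_eval f \<alpha> \<noteq> 0}"

end

theory Submission
  imports Defs "HOL-Computational_Algebra.Polynomial"
begin


definition SH :: "(nat\<Rightarrow>nat) \<Rightarrow> (nat\<Rightarrow>nat) \<Rightarrow> nat set \<Rightarrow> (nat\<Rightarrow>nat) \<Rightarrow> nat \<Rightarrow> nat \<Rightarrow> bool" where
"SH c d J x k r \<longleftrightarrow> (\<exists>j\<in>{1..k+1}. r \<le> d j \<and> (\<exists>t. inj_on t {1..k+1} \<and> t`{1..k+1} \<subseteq> J \<and>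
   (\<forall>i\<in>{1..k+1}. c (t i) = d i) \<and> x (t j) = r \<and> (\<forall>i\<in>{1..k+1}. i \<noteq> j \<longrightarrow> x (t i) = 1) \<and>
   (\<forall>v\<in>J - t`{1..k+1}. x v = c v)))"

lemma SH_intro:
  assumes "j \<in> {1..k+1}" "r \<le> d j" "inj_on t {1..k+1}" "t`{1..k+1} \<subseteq> J"
    "\<forall>i\<in>{1..k+1}. c (t i) = d i" "x (t j) = r" "\<forall>i\<in>{1..k+1}. i \<noteq> j \<longrightarrow> x (t i) = 1"
    "\<forall>v\<in>J - t`{1..k+1}. x v = c v"
  shows "SH c d J x k r"
  unfolding SH_def using assms by blast

lemma ext_t:
  assumes "inj_on t' {1..m}" "t' ` {1..m} \<subseteq> J'" "p \<notin> J'"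
  shows "inj_on (\<lambda>i. if i = 1 then p else t' (i - 1)) {1..Suc m}"
    and "(\<lambda>i. if i = 1 then p else t' (i - 1)) ` {1..Suc m} = insert p (t' ` {1..m})"
proof -
  show "inj_on (\<lambda>i. if i = 1 then p else t' (i - 1)) {1..Suc m}"
    unfolding inj_on_def
  proof (intro ballI impI)
    fix a b assume a: "a \<in> {1..Suc m}" and b: "b \<in> {1..Suc m}"
      and e: "(if a = 1 then p else t' (a - 1)) = (if b = 1 then p else t' (b - 1))"
    show "a = b"
    proof (cases "a = 1")
      case True
      show ?thesis
      proof (rule ccontr)
        assume "a \<noteq> b"
        then have "b \<noteq> 1" using True by simp
        then have "b - 1 \<in> {1..m}" using b by auto
        then have "t' (b - 1) \<in> J'" using assms(2) by auto
        moreover have "t' (b - 1) = p" using e True \<open>b \<noteq> 1\<close> by simp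
        ultimately show False using assms(3) by simp
      qed
    next
      case False
      show ?thesis
      proof (cases "b = 1")
        case True
        have "a - 1 \<in> {1..m}" using a False by auto
        then have "t' (a - 1) \<in> J'" using assms(2) by auto
        moreover have "t' (a - 1) = p" using e True False by simp
        ultimately show ?thesis using assms(3) by simp
      next
        case bF: False
        then have "t' (a-1) = t' (b-1)" using e False by simp
        moreover have "a - 1 \<in> {1..m}" "b - 1 \<in> {1..m}" using a b False bF by auto
        ultimately have "a - 1 = b - 1" using assms(1) by (simp add: inj_on_eq_iff)
        then show ?thesis using a b by auto
      qed
    qed
  qed
  show "(\<lambda>i. if i = 1 then p else t' (i - 1)) ` {1..Suc m} = insert p (t' ` {1..m})"
  proof
    show "(\<lambda>i. if i = 1 then p else t' (i - 1)) ` {1..Suc m} \<subseteq> insert p (t' ` {1..m})"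
    proof
      fix v assume "v \<in> (\<lambda>i. if i = 1 then p else t' (i - 1)) ` {1..Suc m}"
      then obtain i where i: "i \<in> {1..Suc m}" "v = (if i = 1 then p else t' (i - 1))" by blast
      show "v \<in> insert p (t' ` {1..m})"
      proof (cases "i = 1")
        case False
        then have "i - 1 \<in> {1..m}" using i by auto
        then show ?thesis using i False by auto
      qed (use i in auto)
    qed
    show "insert p (t' ` {1..m}) \<subseteq> (\<lambda>i. if i = 1 then p else t' (i - 1)) ` {1..Suc m}"
    proof
      fix v assume "v \<in> insert p (t' ` {1..m})"
      then consider "v = p" | i where "i \<in> {1..m}" "v = t' i" by auto
      then show "v \<in> (\<lambda>i. if i = 1 then p else t' (i - 1)) ` {1..Suc m}"
      proof cases
        case 1 then show ?thesis by (intro image_eqI[of _ _ 1]) auto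
      next
        case 2 then show ?thesis by (intro image_eqI[of _ _ "Suc i"]) auto
      qed
    qed
  qed
qed

lemma arA:
  fixes r y e :: nat
  assumes "r \<le> y" "y \<le> e"
  shows "r * e \<le> y * (e - (y - r))" and "r * e = y * (e - (y - r)) \<Longrightarrow> y = r \<or> y = e"
proof -
  obtain a where a: "y = r + a" using assms(1) le_iff_add by blast
  obtain b where b: "e = y + b" using assms(2) le_iff_add by blast
  have ee: "e - (y - r) = r + b" using a b by simp
  show "r * e \<le> y * (e - (y - r))" unfolding ee using a b by (simp add: algebra_simps)
  show "r * e = y * (e - (y - r)) \<Longrightarrow> y = r \<or> y = e" unfolding ee using a b by (simp add: algebra_simps)
qed

lemma arB:
  fixes r y :: nat
  assumes "1 \<le> y" "y \<le> r"
  shows "r \<le> y * (r + 1 - y)" and "r = y * (r + 1 - y) \<Longrightarrow> y = 1 \<or> y = r"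
proof -
  obtain a where a: "y = 1 + a" using assms(1) le_iff_add by blast
  obtain b where b: "r = y + b" using assms(2) le_iff_add by blast
  have ee: "r + 1 - y = 1 + b" using a b by simp
  show "r \<le> y * (r + 1 - y)" unfolding ee using a b by (simp add: algebra_simps)
  show "r = y * (r + 1 - y) \<Longrightarrow> y = 1 \<or> y = r" unfolding ee using a b by (simp add: algebra_simps)
qed

lemma chain_eq:
  fixes y A B Q R :: nat
  assumes "y * A \<le> R * Q" "B * Q \<le> A" "R \<le> y * B" "0 < Q" "0 < y"
  shows "R = y * B" "A = B * Q"
proof -
  have "R * Q \<le> y * B * Q" using assms(3) by simp
  also have "\<dots> \<le> y * A" using assms(2) by (simp add: mult.assoc)
  finally have "R * Q \<le> y * A" .
  then have eq: "y * A = R * Q" using assms(1) by simp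
  have "y * B * Q \<le> R * Q" using assms(1,2) by (metis mult.assoc mult_le_mono2 order_trans)
  then have "y * B \<le> R" using assms(4) by simp
  then show "R = y * B" using assms(3) by simp
  then have "y * A = y * (B * Q)" using eq by (simp add: mult.assoc)
  then show "A = B * Q" using assms(5) by simp
qed

lemma shape_main:
  fixes c d :: "nat \<Rightarrow> nat" and J :: "nat set" and \<sigma> x :: "nat \<Rightarrow> nat" and k r n :: nat
  assumes "\<forall>i j. 1 \<le> i \<longrightarrow> i \<le> j \<longrightarrow> j \<le> n \<longrightarrow> d i \<le> d j"
    and "\<forall>i\<in>{1..n}. 1 \<le> d i"
    and "bij_betw \<sigma> {1..n} J"
    and "\<forall>i\<in>{1..n}. c (\<sigma> i) = d i"
    and "\<forall>v\<in>J. 1 \<le> x v \<and> x v \<le> c v"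
    and "k < n" and "1 \<le> r" and "r \<le> d (k+1)"
    and "(\<Sum>v\<in>J. c v - x v) \<le> (\<Sum>i=1..k. d i - 1) + (d (k+1) - r)"
  shows "r * (\<Prod>i=k+2..n. d i) \<le> (\<Prod>v\<in>J. x v) \<and>
         ((\<Prod>v\<in>J. x v) \<le> r * (\<Prod>i=k+2..n. d i) \<longrightarrow> SH c d J x k r)"
  using assms
proof (induction n arbitrary: d J \<sigma> x k r)
  case 0 then show ?case by simp
next
  case (Suc n)
  note mono = Suc.prems(1) and pos = Suc.prems(2) and bij = Suc.prems(3) and cap = Suc.prems(4)
    and xb = Suc.prems(5) and kn = Suc.prems(6) and r1 = Suc.prems(7) and rd = Suc.prems(8)
    and bud = Suc.prems(9)
  define p where "p = \<sigma> 1"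
  define J' where "J' = J - {p}"
  define \<sigma>' where "\<sigma>' = (\<lambda>i. \<sigma> (Suc i))"
  define d' where "d' = (\<lambda>i. d (Suc i))"
  define y where "y = x p"
  define A where "A = (\<Prod>v\<in>J'. x v)"
  define S' where "S' = (\<Sum>v\<in>J'. c v - x v)"
  have finJ: "finite J" using bij_betw_finite[OF bij] by simp
  have pJ: "p \<in> J" unfolding p_def by (rule bij_betw_apply[OF bij]) simp
  have JJ: "J = insert p J'" using pJ J'_def by auto
  have pJ': "p \<notin> J'" by (simp add: J'_def)
  have finJ': "finite J'" using finJ J'_def by simp
  have bij': "bij_betw \<sigma>' {1..n} J'"
  proof -
    have b1: "bij_betw \<sigma> ({1..Suc n} - {1}) (J - {p})"
      by (rule bij_betw_DiffI[OF bij]) (use pJ in \<open>auto simp: p_def\<close>)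
    have e1: "{1..Suc n} - {1} = {2..Suc n}" by auto
    have e2: "Suc ` {1..n} = {2..Suc n}" by (simp add: image_Suc_atLeastAtMost)
    have "bij_betw \<sigma> (Suc ` {1..n}) J'" using b1 J'_def e1 e2 by (simp add: numeral_2_eq_2)
    moreover have "bij_betw Suc {1..n} (Suc ` {1..n})" by (simp add: bij_betw_imageI)
    ultimately show ?thesis using bij_betw_trans unfolding \<sigma>'_def comp_def by blast
  qed
  have mono': "\<forall>i j. 1 \<le> i \<longrightarrow> i \<le> j \<longrightarrow> j \<le> n \<longrightarrow> d' i \<le> d' j" using mono by (simp add: d'_def)
  have pos': "\<forall>i\<in>{1..n}. 1 \<le> d' i" using pos by (simp add: d'_def)
  have cap': "\<forall>i\<in>{1..n}. c (\<sigma>' i) = d' i" using cap by (simp add: \<sigma>'_def d'_def)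
  have xb': "\<forall>v\<in>J'. 1 \<le> x v \<and> x v \<le> c v" using xb J'_def by simp
  have cp: "c p = d 1" using cap p_def by simp
  have y1: "1 \<le> y" and yd: "y \<le> d 1" using xb pJ cp y_def by auto
  have prodJ: "(\<Prod>v\<in>J. x v) = y * A" using finJ' pJ' JJ y_def A_def by simp
  have sumJ: "(\<Sum>v\<in>J. c v - x v) = (d 1 - y) + S'" using finJ' pJ' JJ y_def cp S'_def by simp
  have A1: "1 \<le> A" unfolding A_def using xb' by (intro prod_ge_1) auto
  show ?case
  proof (cases k)
    case 0
    have bud0: "r + S' \<le> y" using bud sumJ 0 yd rd by simp
    show ?thesis
    proof (cases n)
      case 0
      have "\<sigma> ` {1..1} = J" using bij bij_betw_imp_surj_on \<open>n = 0\<close> by fastforce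
      then have "J = {p}" by (simp add: p_def)
      then have "J' = {}" using J'_def by simp
      then have P: "(\<Prod>v\<in>J. x v) = y" using prodJ A_def by simp
      have W: "(\<Prod>i=k+2..Suc n. d i) = 1" using \<open>k = 0\<close> \<open>n = 0\<close> by simp
      show ?thesis
      proof (intro conjI impI)
        show "r * (\<Prod>i=k+2..Suc n. d i) \<le> (\<Prod>v\<in>J. x v)" using P W bud0 by simp
        assume "(\<Prod>v\<in>J. x v) \<le> r * (\<Prod>i=k+2..Suc n. d i)"
        then have "y = r" using P W bud0 by simp
        show "SH c d J x k r" unfolding SH_def
        proof (rule bexI[of _ 1], intro conjI exI[of _ "\<lambda>_. p"])
          show "r \<le> d 1" using rd \<open>k = 0\<close> by simp
        qed (use \<open>k = 0\<close> \<open>y = r\<close> y_def cp pJ \<open>J = {p}\<close> in auto)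
      qed
    next
      case (Suc n0)
      define r' where "r' = d 2 - (y - r)"
      have d12: "d 1 \<le> d 2" using mono Suc by auto
      have r'1: "1 \<le> r'" using r'_def d12 yd r1 y1 by arith
      have r'd: "r' \<le> d' (0+1)" by (simp add: r'_def d'_def numeral_2_eq_2)
      have bud': "(\<Sum>v\<in>J'. c v - x v) \<le> (\<Sum>i=1..0. d' i - 1) + (d' (0+1) - r')"
        using bud0 d12 yd r1 by (simp add: r'_def d'_def S'_def numeral_2_eq_2)
      have IH: "r' * (\<Prod>i=0+2..n. d' i) \<le> A \<and> (A \<le> r' * (\<Prod>i=0+2..n. d' i) \<longrightarrow> SH c d' J' x 0 r')"
        using Suc.IH[OF mono' pos' bij' cap' xb' _ r'1 r'd bud'] Suc A_def by simp
      define Q where "Q = (\<Prod>i=Suc 2..Suc n. d i)"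
      have Qeq: "(\<Prod>i=0+2..n. d' i) = Q" unfolding Q_def d'_def add_0
        by (rule prod.shift_bounds_cl_Suc_ivl[symmetric])
      have Wk: "(\<Prod>i=k+2..Suc n. d i) = d 2 * Q" unfolding \<open>k = 0\<close> add_0 Q_def
        by (rule prod.atLeast_Suc_atMost) (simp add: Suc)
      have Qpos: "0 < Q" unfolding Q_def
      proof (intro prod_pos)
        fix a assume "a \<in> {Suc 2..Suc n}"
        then have "a \<in> {1..Suc n}" by simp
        then show "0 < d a" using pos by fastforce
      qed
      have ry: "r \<le> y" using bud0 by simp
      have yd2: "y \<le> d 2" using yd d12 by simp
      note ar = arA[OF ry yd2]
      have IH1: "r' * Q \<le> A" using IH Qeq by simp
      show ?thesis
      proof (intro conjI impI)
        have "r * (\<Prod>i=k+2..Suc n. d i) = r * d 2 * Q" using Wk by simp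
        also have "\<dots> \<le> y * r' * Q" using ar(1) r'_def by simp
        also have "\<dots> \<le> y * A" using IH1 by (simp add: mult.assoc)
        finally show "r * (\<Prod>i=k+2..Suc n. d i) \<le> (\<Prod>v\<in>J. x v)" using prodJ by simp
      next
        assume le: "(\<Prod>v\<in>J. x v) \<le> r * (\<Prod>i=k+2..Suc n. d i)"
        have le2: "y * A \<le> (r * d 2) * Q" using le prodJ Wk by (simp add: mult.assoc)
        have ar1: "r * d 2 \<le> y * r'" using ar(1) r'_def by simp
        note ce = chain_eq[OF le2 IH1 ar1 Qpos] 
        have e1: "r * d 2 = y * r'" using ce y1 by simp
        have e2: "A = r' * Q" using ce y1 by simp
        have SH': "SH c d' J' x 0 r'" using IH Qeq e2 by simp
        then obtain t' where t': "t' 1 \<in> J'" "c (t' 1) = d 2" "x (t' 1) = r'"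
          "\<forall>v\<in>J' - {t' 1}. x v = c v"
          unfolding SH_def d'_def by (auto simp: numeral_2_eq_2)
        have yy: "y = r \<or> y = d 2" using ar(2) e1 r'_def by simp
        show "SH c d J x k r"
        proof (cases "y = r")
          case True
          then have "r' = d 2" using r'_def by simp
          show ?thesis unfolding SH_def
          proof (rule bexI[of _ 1], intro conjI exI[of _ "\<lambda>_. p"])
            show "r \<le> d 1" using rd \<open>k = 0\<close> by simp
            show "\<forall>v\<in>J - (\<lambda>_. p) ` {1..k + 1}. x v = c v"
              using t' \<open>r' = d 2\<close> \<open>k = 0\<close> J'_def by auto
          qed (use \<open>k = 0\<close> True y_def cp pJ in auto)
        next
          case False
          then have "y = d 2" using yy by simp
          then have "r' = r" using r'_def ry by simp
          have "d 1 = d 2" using \<open>y = d 2\<close> yd d12 by simp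
          show ?thesis unfolding SH_def
          proof (rule bexI[of _ 1], intro conjI exI[of _ "\<lambda>_. t' 1"])
            show "r \<le> d 1" using rd \<open>k = 0\<close> by simp
            show "\<forall>v\<in>J - (\<lambda>_. t' 1) ` {1..k + 1}. x v = c v"
            proof
              fix v assume v: "v \<in> J - (\<lambda>_. t' 1) ` {1..k + 1}"
              show "x v = c v"
              proof (cases "v = p")
                case True then show ?thesis using y_def \<open>y = d 2\<close> \<open>d 1 = d 2\<close> cp by simp
              next
                case False then show ?thesis using v t' J'_def \<open>k = 0\<close> by auto
              qed
            qed
          qed (use \<open>k = 0\<close> t' \<open>r' = r\<close> \<open>d 1 = d 2\<close> J'_def in auto)
        qed
      qed
    qed
  next
    case (Suc k0)
    have k0n: "k0 < n" using kn Suc by simp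
    define P where "P = (\<Prod>i=k0+2..n. d' i)"
    have Peq: "(\<Prod>i=k+2..Suc n. d i) = P" unfolding P_def d'_def
    proof -
      have "k + 2 = Suc (k0 + 2)" using Suc by simp
      then show "(\<Prod>i=k+2..Suc n. d i) = (\<Prod>i=k0+2..n. d (Suc i))"
        by (simp only: prod.shift_bounds_cl_Suc_ivl)
    qed
    have Ppos: "0 < P" unfolding P_def
    proof (intro prod_pos)
      fix a assume "a \<in> {k0+2..n}"
      then have "a \<in> {1..n}" by simp
      then show "0 < d' a" using pos' by fastforce
    qed
    define Dk0 where "Dk0 = (\<Sum>i=1..k0. d' i - 1)"
    have sumk: "(\<Sum>i=1..k. d i - 1) = (d 1 - 1) + Dk0"
    proof -
      have "(\<Sum>i=1..k. d i - 1) = (d 1 - 1) + (\<Sum>i=Suc 1..Suc k0. d i - 1)"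
        unfolding Suc by (rule sum.atLeast_Suc_atMost) simp
      also have "(\<Sum>i=Suc 1..Suc k0. d i - 1) = Dk0"
        unfolding Dk0_def d'_def by (rule sum.shift_bounds_cl_Suc_ivl)
      finally show ?thesis .
    qed
    have dk1: "d (k+1) = d' (k0+1)" by (simp add: d'_def Suc)
    have bud1: "S' \<le> Dk0 + (d' (k0+1) - r) + (y - 1)"
    proof -
      have "(d 1 - y) + S' \<le> (d 1 - 1) + Dk0 + (d' (k0+1) - r)"
        using bud sumJ sumk dk1 by simp
      then show ?thesis using y1 yd by arith
    qed
    have rd': "r \<le> d' (k0+1)" using rd dk1 by simp
    show ?thesis
    proof (cases "y \<le> r")
      case True
      define r2 where "r2 = r + 1 - y"
      have r21: "1 \<le> r2" using True r2_def by simp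
      have r2d: "r2 \<le> d' (k0+1)" using rd' r2_def y1 by simp
      have bud2: "(\<Sum>v\<in>J'. c v - x v) \<le> (\<Sum>i=1..k0. d' i - 1) + (d' (k0+1) - r2)"
      proof -
        have "d' (k0+1) - r2 = (d' (k0+1) - r) + (y - 1)" using True rd' y1 r2_def by arith
        then show ?thesis using bud1 S'_def Dk0_def by simp
      qed
      have IH: "r2 * P \<le> A \<and> (A \<le> r2 * P \<longrightarrow> SH c d' J' x k0 r2)"
        using Suc.IH[OF mono' pos' bij' cap' xb' k0n r21 r2d bud2] A_def P_def by simp
      note ar = arB[OF y1 True]
      show ?thesis
      proof (intro conjI impI)
        have "r * (\<Prod>i=k+2..Suc n. d i) = r * P" using Peq by simp
        also have "\<dots> \<le> y * r2 * P" using ar(1) r2_def by simp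
        also have "\<dots> \<le> y * A" using IH by (simp add: mult.assoc)
        finally show "r * (\<Prod>i=k+2..Suc n. d i) \<le> (\<Prod>v\<in>J. x v)" using prodJ by simp
      next
        assume le: "(\<Prod>v\<in>J. x v) \<le> r * (\<Prod>i=k+2..Suc n. d i)"
        have le2: "y * A \<le> r * P" using le prodJ Peq by simp
        have ar1: "r \<le> y * r2" using ar(1) r2_def by simp
        have IH1: "r2 * P \<le> A" using IH by simp
        note ce = chain_eq[OF le2 IH1 ar1 Ppos]
        have e1: "r = y * r2" using ce y1 by simp
        have e2: "A = r2 * P" using ce y1 by simp
        have SH': "SH c d' J' x k0 r2" using IH e2 by simp
        then obtain j' t' where j': "j' \<in> {1..k0+1}" "r2 \<le> d' j'"
          and t': "inj_on t' {1..k0+1}" "t' ` {1..k0+1} \<subseteq> J'"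
          "\<forall>i\<in>{1..k0+1}. c (t' i) = d' i" "x (t' j') = r2"
          "\<forall>i\<in>{1..k0+1}. i \<noteq> j' \<longrightarrow> x (t' i) = 1"
          "\<forall>v\<in>J' - t'`{1..k0+1}. x v = c v"
          unfolding SH_def by blast
        define t where "t = (\<lambda>i. if i = 1 then p else t' (i - 1))"
        have kk: "k + 1 = Suc (k0 + 1)" using Suc by simp
        have tinj: "inj_on t {1..k+1}" unfolding t_def kk by (rule ext_t(1)[OF t'(1,2) pJ'])
        have timg: "t ` {1..k+1} = insert p (t' ` {1..k0+1})" unfolding t_def kk
          by (rule ext_t(2)[OF t'(1,2) pJ'])
        have tsub: "t ` {1..k+1} \<subseteq> J" using timg t'(2) JJ by auto
        have tcap: "\<forall>i\<in>{1..k+1}. c (t i) = d i"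
        proof
          fix i assume i: "i \<in> {1..k+1}"
          show "c (t i) = d i"
          proof (cases "i = 1")
            case True then show ?thesis using cp t_def by simp
          next
            case False
            then have "i - 1 \<in> {1..k0+1}" using i kk by auto
            then have "c (t' (i-1)) = d' (i-1)" using t'(3) by blast
            moreover have "Suc (i - 1) = i" using i by simp
            ultimately show ?thesis using False t_def d'_def by simp
          qed
        qed
        have tcomp: "\<forall>v\<in>J - t`{1..k+1}. x v = c v" using timg t'(6) JJ by auto
        have yy: "y = 1 \<or> y = r" using e1 unfolding r2_def by (rule ar(2))
        show "SH c d J x k r"
        proof (cases "y = 1")
          case True
          then have "r2 = r" using r2_def by simp
          show ?thesis unfolding SH_def
          proof (rule bexI[of _ "Suc j'"], intro conjI exI[of _ t])
            show "r \<le> d (Suc j')" using j' \<open>r2 = r\<close> d'_def by simp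
            show "x (t (Suc j')) = r" using t'(4) \<open>r2 = r\<close> t_def j' by simp
            show "\<forall>i\<in>{1..k+1}. i \<noteq> Suc j' \<longrightarrow> x (t i) = 1"
            proof (intro ballI impI)
              fix i assume i: "i \<in> {1..k+1}" "i \<noteq> Suc j'"
              show "x (t i) = 1"
              proof (cases "i = 1")
                case True then show ?thesis using t_def y_def \<open>y = 1\<close> by simp
              next
                case False
                then have "i - 1 \<in> {1..k0+1}" "i - 1 \<noteq> j'" using i kk by auto
                then show ?thesis using t'(5) False t_def by simp
              qed
            qed
            show "Suc j' \<in> {1..k+1}" using j' kk by simp
          qed (rule tinj | rule tsub | rule tcap | rule tcomp)+
        next
          case False
          then have "y = r" using yy by simp
          then have "r2 = 1" using r2_def by simp
          show ?thesis
          proof (rule SH_intro[where j=1 and t=t, OF _ _ tinj tsub tcap])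
            show "r \<le> d 1" using \<open>y = r\<close> yd by simp
            show "x (t 1) = r" using t_def y_def \<open>y = r\<close> by simp
            show "\<forall>i\<in>{1..k+1}. i \<noteq> 1 \<longrightarrow> x (t i) = 1"
            proof (intro ballI impI)
              fix i assume i: "i \<in> {1..k+1}" "i \<noteq> 1"
              then have "i - 1 \<in> {1..k0+1}" using i kk by auto
              then have "x (t' (i - 1)) = 1" using t'(4,5) \<open>r2 = 1\<close> by (cases "i - 1 = j'") simp_all
              then show "x (t i) = 1" using i t_def by simp
            qed
            show "1 \<in> {1..k+1}" by simp
          qed (rule tcomp)
        qed
      qed
    next
      case False
      then have ry: "r < y" by simp
      show ?thesis
      proof (cases "k0 + 1 < n")
        case False
        then have "k = n" using k0n Suc by simp
        then have W1: "(\<Prod>i=k+2..Suc n. d i) = 1" by simp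
        have "y * 1 \<le> y * A" using A1 by (rule mult_le_mono2)
        then have "y \<le> y * A" by simp
        then have "r < y * A" using ry by linarith
        then show ?thesis using W1 prodJ by simp
      next
        case True
        define e2 where "e2 = d' (k+1)"
        define r3 where "r3 = e2 - (y - r)"
        have kn': "k < n" using True Suc by simp
        have d1e2: "d 1 \<le> e2" using mono kn' unfolding e2_def d'_def by simp
        have r31: "1 \<le> r3" using r3_def d1e2 yd r1 y1 by arith
        have r3d: "r3 \<le> d' (k+1)" using r3_def e2_def by simp
        have sumk': "(\<Sum>i=1..k. d' i - 1) = Dk0 + (d' (k0+1) - 1)"
          unfolding Dk0_def Suc by simp
        have bud3: "(\<Sum>v\<in>J'. c v - x v) \<le> (\<Sum>i=1..k. d' i - 1) + (d' (k+1) - r3)"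
        proof -
          have "d' (k+1) - r3 = y - r" using r3_def e2_def d1e2 yd by simp
          moreover have "(d' (k0+1) - r) + (y - 1) = (d' (k0+1) - 1) + (y - r)"
            using r1 rd' ry by arith
          ultimately show ?thesis using bud1 sumk' S'_def by simp
        qed
        define Q where "Q = (\<Prod>i=k+2..n. d' i)"
        have IH: "r3 * Q \<le> A \<and> (A \<le> r3 * Q \<longrightarrow> SH c d' J' x k r3)"
          using Suc.IH[OF mono' pos' bij' cap' xb' kn' r31 r3d bud3] A_def Q_def by simp
        have PQ: "P = e2 * Q"
        proof -
          have "k0 + 2 = k + 1" using Suc by simp
          then have "P = (\<Prod>i=k+1..n. d' i)" using P_def by simp
          also have "\<dots> = d' (k+1) * (\<Prod>i=Suc (k+1)..n. d' i)"
            by (rule prod.atLeast_Suc_atMost) (use kn' in simp)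
          finally show ?thesis using Q_def e2_def by simp
        qed
        have Qpos: "0 < Q" using Ppos PQ by simp
        have ye2: "y \<le> e2" using yd d1e2 by simp
        note ar = arA[OF less_imp_le[OF ry] ye2]
        have IH1: "r3 * Q \<le> A" using IH by simp
        show ?thesis
        proof (intro conjI impI)
          have "r * (\<Prod>i=k+2..Suc n. d i) = r * e2 * Q" using Peq PQ by simp
          also have "\<dots> \<le> y * r3 * Q" using ar(1) r3_def by simp
          also have "\<dots> \<le> y * A" using IH1 by (simp add: mult.assoc)
          finally show "r * (\<Prod>i=k+2..Suc n. d i) \<le> (\<Prod>v\<in>J. x v)" using prodJ by simp
        next
          assume le: "(\<Prod>v\<in>J. x v) \<le> r * (\<Prod>i=k+2..Suc n. d i)"
          have le2: "y * A \<le> (r * e2) * Q" using le prodJ Peq PQ by (simp add: mult.assoc)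
          have ar1: "r * e2 \<le> y * r3" using ar(1) r3_def by simp
          note ce = chain_eq[OF le2 IH1 ar1 Qpos]
          have eq1: "r * e2 = y * r3" using ce y1 by simp
          have eq2: "A = r3 * Q" using ce y1 by simp
          have "y = e2" using ar(2) eq1 r3_def ry by auto
          then have "r3 = r" using r3_def ry by simp
          have SH': "SH c d' J' x k r" using IH eq2 \<open>r3 = r\<close> by simp
          then obtain j' t' where j': "j' \<in> {1..k+1}" "r \<le> d' j'"
            and t': "inj_on t' {1..k+1}" "t' ` {1..k+1} \<subseteq> J'"
            "\<forall>i\<in>{1..k+1}. c (t' i) = d' i" "x (t' j') = r"
            "\<forall>i\<in>{1..k+1}. i \<noteq> j' \<longrightarrow> x (t' i) = 1"
            "\<forall>v\<in>J' - t'`{1..k+1}. x v = c v"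
            unfolding SH_def by blast
          have dall: "\<forall>i\<in>{1..k+1}. d' i = d i"
          proof
            fix i assume i: "i \<in> {1..k+1}"
            have "d 1 \<le> d i" using mono i kn' by auto
            moreover have "d i \<le> d (Suc i)" using mono i kn' by auto
            moreover have "d (Suc i) \<le> e2" using mono i kn' unfolding e2_def d'_def by auto
            ultimately show "d' i = d i" using \<open>y = e2\<close> yd d'_def by simp
          qed
          show "SH c d J x k r" unfolding SH_def
          proof (rule bexI[OF _ j'(1)], intro conjI exI[of _ t'])
            show "r \<le> d j'" using j' dall by simp
            show "t' ` {1..k+1} \<subseteq> J" using t'(2) JJ by auto
            show "\<forall>i\<in>{1..k+1}. c (t' i) = d i" using t'(3) dall by simp
            show "\<forall>v\<in>J - t' ` {1..k + 1}. x v = c v"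
            proof
              fix v assume v: "v \<in> J - t' ` {1..k + 1}"
              show "x v = c v"
              proof (cases "v = p")
                case True then show ?thesis using y_def \<open>y = e2\<close> d1e2 yd cp by simp
              next
                case False then show ?thesis using v t'(6) J'_def by auto
              qed
            qed
          qed (use t' in auto)
        qed
      qed
    qed
  qed
qed



lemma uni_nonroots:
  fixes a :: "nat \<Rightarrow> 'a::{field,finite}" and Y :: "nat set" and B :: "'a set"
  assumes "finite Y" "e \<in> Y" "a e \<noteq> 0" "\<forall>y\<in>Y. e < y \<longrightarrow> a y = 0"
  shows "card B - e \<le> card {x\<in>B. (\<Sum>y\<in>Y. a y * x ^ y) \<noteq> 0}"
proof -
  define p where "p = (\<Sum>y\<in>Y. monom (a y) y)"
  have cf: "coeff p z = (if z \<in> Y then a z else 0)" for z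
    unfolding p_def coeff_sum coeff_monom using assms(1) by (simp add: sum.delta)
  have pv: "poly p x = (\<Sum>y\<in>Y. a y * x ^ y)" for x
    unfolding p_def poly_sum poly_monom ..
  have p0: "p \<noteq> 0" using cf[of e] assms(2,3) by auto
  have dg: "degree p \<le> e" using cf assms(4) by (intro degree_le) auto
  have R: "card {x. poly p x = 0} \<le> e" using card_poly_roots_bound[OF p0] dg by simp
  have eq: "{x\<in>B. (\<Sum>y\<in>Y. a y * x ^ y) \<noteq> 0} = B - {x. poly p x = 0}" using pv by auto
  have "card B - e \<le> card B - card {x. poly p x = 0}" using R by simp
  also have "\<dots> \<le> card (B - {x. poly p x = 0})" by (rule diff_card_le_card_Diff) simp
  finally show ?thesis using eq by simp
qed

definition ev :: "nat \<Rightarrow> (nat\<Rightarrow>nat) set \<Rightarrow> ((nat\<Rightarrow>nat) \<Rightarrow> 'a::comm_semiring_1) \<Rightarrow> (nat \<Rightarrow> 'a) \<Rightarrow> 'a" where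
  "ev n S C \<alpha> = (\<Sum>m\<in>S. C m * (\<Prod>i=1..n. \<alpha> i ^ m i))"

lemma ev_cong:
  assumes "\<forall>i\<in>{1..n}. \<alpha> i = \<beta> i"
  shows "ev n S C \<alpha> = ev n S C \<beta>"
  unfolding ev_def using assms by (intro sum.cong refl arg_cong2[where f="(*)"] prod.cong) auto

lemma PiE_upd_Suc: "f \<in> PiE {1..n} K \<Longrightarrow> x \<in> K (Suc n) \<Longrightarrow> f(Suc n := x) \<in> PiE {1..Suc n} K"
proof -
  assume f: "f \<in> PiE {1..n} K" and x: "x \<in> K (Suc n)"
  have "\<forall>i\<in>{1..Suc n}. (f(Suc n := x)) i \<in> K i"
  proof
    fix i assume i: "i \<in> {1..Suc n}"
    show "(f(Suc n := x)) i \<in> K i"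
    proof (cases "i = Suc n")
      case True then show ?thesis using x by simp
    next
      case False then have "i \<in> {1..n}" using i by auto
      then show ?thesis using PiE_mem[OF f] False by simp
    qed
  qed
  moreover have "f(Suc n := x) \<in> extensional {1..Suc n}"
    unfolding extensional_def using PiE_arb[OF f] by auto
  ultimately show ?thesis by (simp add: PiE_iff)
qed

lemma grid_bound:
  fixes K :: "nat \<Rightarrow> 'a::{field,finite} set" and C :: "(nat \<Rightarrow> nat) \<Rightarrow> 'a"
  assumes "finite S" "\<forall>m\<in>S. \<forall>i\<in>{1..n}. m i < card (K i)"
    "\<forall>m\<in>S. \<forall>i. i \<notin> {1..n} \<longrightarrow> m i = 0" "\<exists>m\<in>S. C m \<noteq> 0"
  shows "\<exists>m\<in>S. C m \<noteq> 0 \<and> (\<Prod>i=1..n. card (K i) - m i) \<le> card {\<alpha> \<in> PiE {1..n} K. ev n S C \<alpha> \<noteq> 0}"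
  using assms
proof (induction n arbitrary: S C)
  case 0
  then obtain m where m: "m \<in> S" "C m \<noteq> 0" by blast
  have z: "\<forall>m'\<in>S. m' = (\<lambda>_. 0)" using 0(3) by auto
  have "x = m" if "x \<in> S" for x using z that m(1) by metis
  then have S: "S = {m}" using m(1) by blast
  have "ev 0 S C \<alpha> = C m" for \<alpha> using S by (simp add: ev_def)
  then have "{\<alpha> \<in> PiE {1..0} K. ev 0 S C \<alpha> \<noteq> 0} = PiE {} K" using m(2) by simp
  then show ?case using m by auto
next
  case (Suc n)
  define N where "N = Suc n"
  define Z where "Z = {m\<in>S. C m \<noteq> 0}"
  define Y where "Y = (\<lambda>m. m N) ` S"
  define e where "e = Max ((\<lambda>m. m N) ` Z)"
  define Fib where "Fib = (\<lambda>y. {m\<in>S. m N = y})"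
  define Sy where "Sy = (\<lambda>y. (\<lambda>m. m(N:=0)) ` Fib y)"
  define Cy where "Cy = (\<lambda>y g. C (g(N:=y)))"
  define A where "A = (\<lambda>y \<alpha>. ev n (Sy y) (Cy y) \<alpha>)"
  have finS: "finite S" using Suc.prems(1) .
  have finY: "finite Y" using finS Y_def by simp
  have finZ: "finite Z" using finS Z_def by simp
  have Zne: "Z \<noteq> {}" using Suc.prems(4) Z_def by auto
  have eZ: "e \<in> (\<lambda>m. m N) ` Z" unfolding e_def using finZ Zne by (intro Max_in) auto
  have eY: "e \<in> Y" using eZ Y_def Z_def by auto
  have ge: "\<And>m. m \<in> Z \<Longrightarrow> m N \<le> e" unfolding e_def using finZ by (intro Max_ge) auto
  have upd: "\<And>m y. m N = y \<Longrightarrow> (m(N:=0))(N:=y) = m" by auto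
  have injF: "inj_on (\<lambda>m. m(N:=0)) (Fib y)" for y
  proof
    fix m1 m2 assume "m1 \<in> Fib y" "m2 \<in> Fib y" "m1(N:=0) = m2(N:=0)"
    note h = this
    show "m1 = m2"
    proof
      fix i show "m1 i = m2 i"
      proof (cases "i = N")
        case True then show ?thesis using h(1,2) by (simp add: Fib_def)
      next
        case False then show ?thesis using fun_cong[OF h(3), of i] by simp
      qed
    qed
  qed
  have decomp: "ev (Suc n) S C \<alpha> = (\<Sum>y\<in>Y. A y \<alpha> * \<alpha> N ^ y)" for \<alpha>
  proof -
    have "ev (Suc n) S C \<alpha> = (\<Sum>m\<in>S. C m * (\<Prod>i=1..n. \<alpha> i ^ m i) * \<alpha> N ^ m N)"
      unfolding ev_def N_def by (simp add: mult.assoc)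
    also have "\<dots> = (\<Sum>y\<in>Y. \<Sum>m\<in>Fib y. C m * (\<Prod>i=1..n. \<alpha> i ^ m i) * \<alpha> N ^ m N)"
      unfolding Y_def Fib_def by (rule sum.image_gen[OF finS])
    also have "\<dots> = (\<Sum>y\<in>Y. (\<Sum>m\<in>Fib y. C m * (\<Prod>i=1..n. \<alpha> i ^ m i)) * \<alpha> N ^ y)"
      by (intro sum.cong refl) (simp add: sum_distrib_right Fib_def)
    also have "\<dots> = (\<Sum>y\<in>Y. A y \<alpha> * \<alpha> N ^ y)"
    proof (intro sum.cong refl arg_cong2[where f="(*)"])
      fix y
      have "A y \<alpha> = (\<Sum>m\<in>Fib y. Cy y (m(N:=0)) * (\<Prod>i=1..n. \<alpha> i ^ (m(N:=0)) i))"
        unfolding A_def ev_def Sy_def by (rule sum.reindex[OF injF, unfolded comp_def])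
      also have "\<dots> = (\<Sum>m\<in>Fib y. C m * (\<Prod>i=1..n. \<alpha> i ^ m i))"
      proof (intro sum.cong refl arg_cong2[where f="(*)"])
        fix m assume "m \<in> Fib y"
        then have "m N = y" by (simp add: Fib_def)
        then show "Cy y (m(N:=0)) = C m" unfolding Cy_def by (simp add: fun_upd_idem)
        show "(\<Prod>i=1..n. \<alpha> i ^ (m(N:=0)) i) = (\<Prod>i=1..n. \<alpha> i ^ m i)"
          by (intro prod.cong refl) (auto simp: N_def)
      qed
      finally show "(\<Sum>m\<in>Fib y. C m * (\<Prod>i=1..n. \<alpha> i ^ m i)) = A y \<alpha>" by simp
    qed
    finally show ?thesis .
  qed
  have above: "\<forall>y\<in>Y. e < y \<longrightarrow> A y \<alpha> = 0" for \<alpha>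
  proof (intro ballI impI)
    fix y assume "y \<in> Y" "e < y"
    have "Cy y g = 0" if "g \<in> Sy y" for g
    proof -
      obtain m where m: "m \<in> Fib y" "g = m(N:=0)" using \<open>g \<in> Sy y\<close> Sy_def by auto
      have "m N = y" using m(1) by (simp add: Fib_def)
      then have "Cy y g = C m" using m(2) unfolding Cy_def by (simp add: fun_upd_idem)
      moreover have "C m = 0"
      proof (rule ccontr)
        assume "C m \<noteq> 0"
        then have "m \<in> Z" using m Z_def Fib_def by simp
        then have "m N \<le> e" by (rule ge)
        then show False using m(1) \<open>e < y\<close> Fib_def by simp
      qed
      ultimately show ?thesis by simp
    qed
    then show "A y \<alpha> = 0" unfolding A_def ev_def by simp
  qed
  have finSe: "finite (Sy e)" using finS unfolding Sy_def Fib_def by simp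
  have bSe: "\<forall>g\<in>Sy e. \<forall>i\<in>{1..n}. g i < card (K i)"
    using Suc.prems(2) unfolding Sy_def Fib_def N_def by auto
  have zSe: "\<forall>g\<in>Sy e. \<forall>i. i \<notin> {1..n} \<longrightarrow> g i = 0"
    using Suc.prems(3) unfolding Sy_def Fib_def N_def by auto
  have exSe: "\<exists>g\<in>Sy e. Cy e g \<noteq> 0"
  proof -
    obtain m0 where m0: "m0 \<in> Z" "m0 N = e" using eZ by auto
    have "m0(N:=0) \<in> Sy e" using m0 Z_def Fib_def Sy_def by auto
    moreover have "Cy e (m0(N:=0)) \<noteq> 0" using m0 Z_def Cy_def by (simp add: fun_upd_idem)
    ultimately show ?thesis by blast
  qed
  obtain g where g: "g \<in> Sy e" "Cy e g \<noteq> 0"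
    and gb: "(\<Prod>i=1..n. card (K i) - g i) \<le> card {\<alpha> \<in> PiE {1..n} K. ev n (Sy e) (Cy e) \<alpha> \<noteq> 0}"
    using Suc.IH[OF finSe bSe zSe exSe] by blast
  define G where "G = {\<alpha> \<in> PiE {1..n} K. A e \<alpha> \<noteq> 0}"
  have gb': "(\<Prod>i=1..n. card (K i) - g i) \<le> card G" using gb unfolding G_def A_def .
  define m where "m = g(N:=e)"
  obtain m' where m': "m' \<in> Fib e" "g = m'(N:=0)" using g(1) Sy_def by auto
  have "m' N = e" using m'(1) by (simp add: Fib_def)
  then have mm: "m = m'" using m'(2) m_def by (simp add: fun_upd_idem)
  have mS: "m \<in> S" using mm m' Fib_def by simp
  have Cm: "C m \<noteq> 0" using g(2) Cy_def m_def by simp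
  define NR where "NR = (\<lambda>\<alpha>'. {x\<in>K N. (\<Sum>y\<in>Y. A y \<alpha>' * x ^ y) \<noteq> 0})"
  have NRb: "card (K N) - e \<le> card (NR \<alpha>')" if "\<alpha>' \<in> G" for \<alpha>'
    unfolding NR_def
    by (rule uni_nonroots[OF finY eY _ above]) (use that in \<open>simp add: G_def\<close>)
  define F where "F = (\<lambda>(\<alpha>'::nat\<Rightarrow>'a, x::'a). \<alpha>'(N:=x))"
  have Fin: "F ` (SIGMA \<alpha>':G. NR \<alpha>') \<subseteq> {\<alpha> \<in> PiE {1..Suc n} K. ev (Suc n) S C \<alpha> \<noteq> 0}"
  proof
    fix z assume "z \<in> F ` (SIGMA \<alpha>':G. NR \<alpha>')"
    then obtain \<alpha>' x where ax: "\<alpha>' \<in> G" "x \<in> NR \<alpha>'" "z = \<alpha>'(N:=x)" unfolding F_def by auto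
    have a1: "\<alpha>' \<in> PiE {1..n} K" using ax G_def by simp
    have x1: "x \<in> K N" using ax NR_def by simp
    have "z \<in> PiE {1..Suc n} K"
      using PiE_upd_Suc[OF a1 x1[unfolded N_def]] ax(3) unfolding N_def by simp
    moreover have "A y z = A y \<alpha>'" for y
      unfolding A_def using ax(3) by (intro ev_cong) (auto simp: N_def)
    then have "ev (Suc n) S C z = (\<Sum>y\<in>Y. A y \<alpha>' * x ^ y)" using decomp ax(3) by simp
    then have "ev (Suc n) S C z \<noteq> 0" using ax(2) NR_def by simp
    ultimately show "z \<in> {\<alpha> \<in> PiE {1..Suc n} K. ev (Suc n) S C \<alpha> \<noteq> 0}" by simp
  qed
  have Finj: "inj_on F (SIGMA \<alpha>':G. NR \<alpha>')"
  proof
    fix u v assume u: "u \<in> (SIGMA \<alpha>':G. NR \<alpha>')" and v: "v \<in> (SIGMA \<alpha>':G. NR \<alpha>')" and e: "F u = F v"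
    obtain a1 x1 where u': "u = (a1, x1)" "a1 \<in> G" using u by auto
    obtain a2 x2 where v': "v = (a2, x2)" "a2 \<in> G" using v by auto
    have e': "a1(N:=x1) = a2(N:=x2)" using e u' v' F_def by simp
    have p1: "a1 \<in> PiE {1..n} K" and p2: "a2 \<in> PiE {1..n} K" using u' v' G_def by auto
    have nn: "N \<notin> {1..n}" by (simp add: N_def)
    have un1: "a1 N = undefined" using PiE_arb[OF p1 nn] .
    have un2: "a2 N = undefined" using PiE_arb[OF p2 nn] .
    have "a1 = a2"
    proof
      fix i show "a1 i = a2 i"
      proof (cases "i = N")
        case True then show ?thesis using un1 un2 by simp
      next
        case False then show ?thesis using fun_cong[OF e', of i] by simp
      qed
    qed
    moreover have "x1 = x2" using fun_cong[OF e', of N] by simp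
    ultimately show "u = v" using u' v' by simp
  qed
  have finPi: "finite (PiE {1..n} K)" by (rule finite_PiE) auto
  have finG: "finite G" unfolding G_def by (rule finite_subset[OF _ finPi]) auto
  have finNR: "\<forall>a\<in>G. finite (NR a)" by simp
  have "(\<Prod>i=1..Suc n. card (K i) - m i) = (\<Prod>i=1..n. card (K i) - g i) * (card (K N) - e)"
  proof -
    have "(\<Prod>i=1..n. card (K i) - m i) = (\<Prod>i=1..n. card (K i) - g i)"
      by (intro prod.cong refl) (auto simp: m_def N_def)
    moreover have "m N = e" by (simp add: m_def)
    ultimately show ?thesis by (simp add: N_def)
  qed
  also have "\<dots> \<le> card G * (card (K N) - e)" using gb' by simp
  also have "\<dots> \<le> (\<Sum>a\<in>G. card (NR a))" using sum_bounded_below[of G "card (K N) - e" "\<lambda>a. card (NR a)"] NRb by simp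
  also have "\<dots> = card (SIGMA \<alpha>':G. NR \<alpha>')" using finG finNR by simp
  also have "\<dots> = card (F ` (SIGMA \<alpha>':G. NR \<alpha>'))" using Finj by (simp add: card_image)
  also have "\<dots> \<le> card {\<alpha> \<in> PiE {1..Suc n} K. ev (Suc n) S C \<alpha> \<noteq> 0}"
    by (rule card_mono[OF _ Fin]) (rule finite_subset[OF _ finite_PiE[of "{1..Suc n}" K]], auto)
  finally show ?case using mS Cm by blast
qed


lemma chain_le:
  assumes "\<forall>i\<in>{1..<n}. K i \<subseteq> K (Suc i)" "1 \<le> a" "a \<le> b" "b \<le> n"
  shows "K a \<subseteq> K b"
  using assms(3,4)
proof (induction b)
  case 0 then show ?case using assms(2) by simp
next
  case (Suc b)
  show ?case
  proof (cases "a = Suc b")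
    case True then show ?thesis by simp
  next
    case False
    then have "a \<le> b" using Suc.prems by simp
    then have "K a \<subseteq> K b" using Suc by simp
    moreover have "b \<in> {1..<n}" using \<open>a \<le> b\<close> assms(2) Suc.prems by simp
    ultimately show ?thesis using assms(1) by blast
  qed
qed

theorem mainTheorem9:
  fixes K :: "nat \<Rightarrow> 'a::{field,finite} set"
    and f :: "'a mpoly_rep"
    and n k l :: nat
  defines "d \<equiv> \<lambda>i. card (K i)"
  assumes subf: "\<forall>i\<in>{1..n}. is_subfield (K i)"
    and chain: "\<forall>i\<in>{1..<n}. K i \<subseteq> K (Suc i)"
    and vars: "\<forall>m\<in>Poly_Mapping.keys f. Poly_Mapping.keys m \<subseteq> {1..n}"
    and nonzero: "f \<noteq> 0"
    and deg: "mpoly_tdeg f = (\<Sum>i=1..k. d i - 1) + l"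
    and k_lt: "k < n"
    and l_pos: "0 < l"
    and l_le: "l \<le> d (k+1) - 1"
    and reduced: "\<forall>m\<in>Poly_Mapping.keys f. \<forall>i\<in>{1..n}. Poly_Mapping.lookup m i < d i"
    and weight: "hamming_weight_eval n K f = (d (k+1) - l) * (\<Prod>i=k+2..n. d i)"
  shows "\<exists>j\<in>{1..k+1}. d j \<ge> d (k+1) - l \<and>
           (\<exists>t::nat \<Rightarrow> nat. inj_on t {1..k+1} \<and> t ` {1..k+1} \<subseteq> {1..n} \<and>
              (\<forall>i\<in>{1..k+1}. K (t i) = K i) \<and>
              Poly_Mapping.lookup f (\<Sum>i\<in>{1..k+1}. Poly_Mapping.single (t i)
                   (if i = j then d j - (d (k+1) - l) else d i - 1)) \<noteq> 0)"
  proof -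
  have finK: "\<And>i. finite (K i)" by simp
  have d2: "\<And>i. i \<in> {1..n} \<Longrightarrow> 2 \<le> d i"
  proof -
    fix i assume "i \<in> {1..n}"
    then have "0 \<in> K i" "1 \<in> K i" using subf unfolding is_subfield_def by auto
    then have "{0, 1} \<subseteq> K i" by simp
    then have "card {0::'a, 1} \<le> card (K i)" using finK by (rule card_mono[rotated])
    then show "2 \<le> d i" unfolding d_def by simp
  qed
  have Ksub: "\<And>a b. 1 \<le> a \<Longrightarrow> a \<le> b \<Longrightarrow> b \<le> n \<Longrightarrow> K a \<subseteq> K b"
    using chain_le[OF chain] by blast
  have dmono: "\<forall>i j. 1 \<le> i \<longrightarrow> i \<le> j \<longrightarrow> j \<le> n \<longrightarrow> d i \<le> d j"
    unfolding d_def by (intro allI impI card_mono[OF finK Ksub]) auto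
  have dpos: "\<forall>i\<in>{1..n}. 1 \<le> d i" using d2 by fastforce
  have Keq: "K a = K b" if "a \<in> {1..n}" "b \<in> {1..n}" "d a = d b" for a b
  proof (cases "a \<le> b")
    case True
    then have "K a \<subseteq> K b" using Ksub that by auto
    then show ?thesis using card_subset_eq[OF finK] that(3) unfolding d_def by blast
  next
    case False
    then have "K b \<subseteq> K a" using Ksub that by auto
    then show ?thesis using card_subset_eq[OF finK] that(3) unfolding d_def by metis
  qed
  define S where "S = Poly_Mapping.lookup ` Poly_Mapping.keys f"
  define C where "C = (\<lambda>g. Poly_Mapping.lookup f (Abs_poly_mapping g))"
  have injl: "inj_on Poly_Mapping.lookup (Poly_Mapping.keys f)" by (simp add: inj_on_def)
  have finS: "finite S" unfolding S_def by simp
  have zero_out: "\<And>m i. m \<in> Poly_Mapping.keys f \<Longrightarrow> i \<notin> {1..n} \<Longrightarrow> Poly_Mapping.lookup m i = 0"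
  proof -
    fix m i assume "m \<in> Poly_Mapping.keys f" "i \<notin> {1..n}"
    then have "i \<notin> Poly_Mapping.keys m" using vars by blast
    then show "Poly_Mapping.lookup m i = 0" by (simp add: not_in_keys_iff_lookup_eq_zero)
  qed
  have bS: "\<forall>g\<in>S. \<forall>i\<in>{1..n}. g i < card (K i)" using reduced unfolding S_def d_def by auto
  have zS: "\<forall>g\<in>S. \<forall>i. i \<notin> {1..n} \<longrightarrow> g i = 0" using zero_out unfolding S_def by auto
  have Cl: "\<And>m. C (Poly_Mapping.lookup m) = Poly_Mapping.lookup f m" unfolding C_def by simp
  have exS: "\<exists>g\<in>S. C g \<noteq> 0"
  proof -
    obtain m where "m \<in> Poly_Mapping.keys f" using nonzero keys_eq_empty by blast
    then show ?thesis unfolding S_def using Cl by (auto simp: in_keys_iff)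
  qed
  have evq: "ev n S C \<alpha> = mpoly_eval f \<alpha>" for \<alpha>
  proof -
    have "ev n S C \<alpha> = (\<Sum>m\<in>Poly_Mapping.keys f. C (Poly_Mapping.lookup m) *
            (\<Prod>i=1..n. \<alpha> i ^ Poly_Mapping.lookup m i))"
      unfolding ev_def S_def by (rule sum.reindex[OF injl, unfolded comp_def])
    also have "\<dots> = mpoly_eval f \<alpha>"
      unfolding mpoly_eval_def
    proof (intro sum.cong refl arg_cong2[where f="(*)"])
      fix m assume m: "m \<in> Poly_Mapping.keys f"
      show "C (Poly_Mapping.lookup m) = Poly_Mapping.lookup f m" by (rule Cl)
      show "(\<Prod>i=1..n. \<alpha> i ^ Poly_Mapping.lookup m i) =
            (\<Prod>v\<in>Poly_Mapping.keys m. \<alpha> v ^ Poly_Mapping.lookup m v)"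
        by (rule prod.mono_neutral_right) (use m vars in \<open>auto simp: not_in_keys_iff_lookup_eq_zero\<close>)
    qed
    finally show ?thesis .
  qed
  obtain g where g: "g \<in> S" "C g \<noteq> 0"
    and gb: "(\<Prod>i=1..n. card (K i) - g i) \<le> card {\<alpha> \<in> PiE {1..n} K. ev n S C \<alpha> \<noteq> 0}"
    using grid_bound[OF finS bS zS exS] by blast
  obtain m where m: "m \<in> Poly_Mapping.keys f" and gm: "g = Poly_Mapping.lookup m" using g(1) S_def by auto
  define x where "x = (\<lambda>i. d i - Poly_Mapping.lookup m i)"
  define r where "r = d (k+1) - l"
  have lm: "\<And>i. i \<in> {1..n} \<Longrightarrow> Poly_Mapping.lookup m i < d i" using reduced m by auto
  have W: "(\<Prod>v\<in>{1..n}. x v) \<le> r * (\<Prod>i=k+2..n. d i)"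
  proof -
    have "(\<Prod>v\<in>{1..n}. x v) = (\<Prod>i=1..n. card (K i) - g i)" unfolding x_def d_def gm by simp
    also have "\<dots> \<le> hamming_weight_eval n K f"
      using gb unfolding hamming_weight_eval_def evq .
    finally show ?thesis using weight r_def by simp
  qed
  have k1n: "k + 1 \<in> {1..n}" using k_lt by simp
  have r1: "1 \<le> r" using l_le l_pos r_def d2[OF k1n] by simp
  have rd: "r \<le> d (k+1)" using r_def by simp
  have xb: "\<forall>v\<in>{1..n}. 1 \<le> x v \<and> x v \<le> d v" using lm unfolding x_def by fastforce
  have md: "mono_deg m = (\<Sum>v\<in>{1..n}. Poly_Mapping.lookup m v)"
    unfolding mono_deg_def
    by (rule sum.mono_neutral_left) (use m vars in \<open>auto simp: not_in_keys_iff_lookup_eq_zero\<close>)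
  have mdle: "mono_deg m \<le> mpoly_tdeg f"
    unfolding mpoly_tdeg_def using m by (intro Max_ge) auto
  have bud: "(\<Sum>v\<in>{1..n}. d v - x v) \<le> (\<Sum>i=1..k. d i - 1) + (d (k+1) - r)"
  proof -
    have "(\<Sum>v\<in>{1..n}. d v - x v) = (\<Sum>v\<in>{1..n}. Poly_Mapping.lookup m v)"
      using lm unfolding x_def by (intro sum.cong refl) (simp add: less_imp_le)
    also have "\<dots> \<le> mpoly_tdeg f" using md mdle by simp
    also have "\<dots> = (\<Sum>i=1..k. d i - 1) + (d (k+1) - r)" using deg r_def l_le by simp
    finally show ?thesis .
  qed
  have bij: "bij_betw id {1..n} {1..n}" by simp
  have "SH d d {1..n} x k r"
    using shape_main[OF dmono dpos bij _ xb k_lt r1 rd bud] W by simp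
  then obtain j t where j: "j \<in> {1..k+1}" "r \<le> d j"
    and t: "inj_on t {1..k+1}" "t ` {1..k+1} \<subseteq> {1..n}"
      "\<forall>i\<in>{1..k+1}. d (t i) = d i" "x (t j) = r"
      "\<forall>i\<in>{1..k+1}. i \<noteq> j \<longrightarrow> x (t i) = 1"
      "\<forall>v\<in>{1..n} - t`{1..k+1}. x v = d v"
    unfolding SH_def by blast
  have tt: "\<forall>i\<in>{1..k+1}. t i \<in> {1..n}" using t(2) by (simp only: image_subset_iff)
  define ex where "ex = (\<lambda>i. if i = j then d j - (d (k+1) - l) else d i - 1)"
  have meq: "(\<Sum>i\<in>{1..k+1}. Poly_Mapping.single (t i) (ex i)) = m"
  proof (rule poly_mapping_eqI)
    fix v
    have ls: "Poly_Mapping.lookup (\<Sum>i\<in>{1..k+1}. Poly_Mapping.single (t i) (ex i)) v =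
          (\<Sum>i\<in>{1..k+1}. if t i = v then ex i else 0)"
      unfolding lookup_sum by (intro sum.cong refl) (simp add: lookup_single when_def)
    show "Poly_Mapping.lookup (\<Sum>i\<in>{1..k+1}. Poly_Mapping.single (t i) (ex i)) v = Poly_Mapping.lookup m v"
    proof (cases "v \<in> t ` {1..k+1}")
      case True
      then obtain i0 where i0: "i0 \<in> {1..k+1}" "v = t i0" by auto
      have "(\<Sum>i\<in>{1..k+1}. if t i = v then ex i else 0) = (\<Sum>i\<in>{1..k+1}. if i = i0 then ex i else 0)"
        using i0 t(1) by (intro sum.cong refl) (auto simp: inj_on_eq_iff)
      also have "\<dots> = ex i0" using i0 by simp
      finally have s: "(\<Sum>i\<in>{1..k+1}. if t i = v then ex i else 0) = ex i0" .
      have vn: "v \<in> {1..n}" using i0 tt by simp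
      have lv: "Poly_Mapping.lookup m v = d v - x v" using lm[OF vn] unfolding x_def by simp
      have dv: "d v = d i0" using t(3) i0 by simp
      show ?thesis
      proof (cases "i0 = j")
        case True
        then show ?thesis using ls s lv dv t(4) i0 unfolding ex_def r_def by simp
      next
        case False
        then show ?thesis using ls s lv dv t(5) i0 unfolding ex_def by simp
      qed
    next
      case False
      then have s: "(\<Sum>i\<in>{1..k+1}. if t i = v then ex i else 0) = 0"
        by (intro sum.neutral) auto
      show ?thesis
      proof (cases "v \<in> {1..n}")
        case True
        then have "x v = d v" using t(6) False by simp
        then have "Poly_Mapping.lookup m v = 0" using lm[OF True] d2[OF True] unfolding x_def by simp
        then show ?thesis using ls s by simp
      next
        case nF: False
        then show ?thesis using ls s zero_out[OF m nF] by simp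
      qed
    qed
  qed
  have Kt: "\<forall>i\<in>{1..k+1}. K (t i) = K i"
  proof
    fix i assume i: "i \<in> {1..k+1}"
    have a: "t i \<in> {1..n}" using tt i by simp
    have b: "i \<in> {1..n}" using i k_lt by auto
    have "d (t i) = d i" using t(3) i by simp
    then show "K (t i) = K i" by (rule Keq[OF a b])
  qed
  have c1: "d (k+1) - l \<le> d j" using j(2) r_def by simp
  have c2: "Poly_Mapping.lookup f (\<Sum>i\<in>{1..k+1}. Poly_Mapping.single (t i)
                   (if i = j then d j - (d (k+1) - l) else d i - 1)) \<noteq> 0"
  proof -
    have e: "(\<Sum>i\<in>{1..k+1}. Poly_Mapping.single (t i)
                   (if i = j then d j - (d (k+1) - l) else d i - 1)) = m" using meq unfolding ex_def .
    show ?thesis unfolding e using m by (simp add: in_keys_iff)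
  qed
  show ?thesis using j(1) c1 t(1) t(2) Kt c2 by blast
qed

end
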